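(* Let $\lambda\in\mathbb{R}\setminus\{0\}$, $k\in\mathbb{Z}$, $u\in\mathbb{C}$ with $u\neq1$, and $x,y\in\mathbb{R}$. Then for every integer $n\ge0$, \[ 2\Big\{\sum_{l=0}^{n}\binom{n}{l}(1)_{n-l,\lambda}FG_{l,\lambda}^{[k,c]}(x,y;u)-u\,FG_{n,\lambda}^{[k,c]}(x,y;u)\Big\} =(1-u)\,n\sum_{m=0}^{n-1}\frac{\binom{n-1}{m}}{m+1}\sum_{j=1}^{m+1}\frac{(1)_{j,\lambda}}{j^{k-1}}S_{1,\lambda}(m+1,j)\sum_{l=0}^{n-1-m}\binom{n-1-m}{l}(x)_{n-1-m-l,\lambda}\big((iy)_{l,\lambda}+(-iy)_{l,\lambda}\big) \] and \[ 2i\Big\{\sum_{l=0}^{n}\binom{n}{l}(1)_{n-l,\lambda}FG_{l,\lambda}^{[k,s]}(x,y;u)-u\,FG_{n,\lambda}^{[k,s]}(x,y;u)\Big\} =(1-u)\,n\sum_{m=0}^{n-1}\frac{\binom{n-1}{m}}{m+1}\sum_{j=1}^{m+1}\frac{(1)_{j,\lambda}}{j^{k-1}}S_{1,\lambda}(m+1,j)\sum_{l=0}^{n-1-m}\binom{n-1-m}{l}(x)_{n-1-m-l,\lambda}\big((iy)_{l,\lambda}-(-iy)_{l,\lambda}\big). \]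
   Context: All generating functions are formal power series in $t$. For $z\in\mathbb{C}$: $(z)_{0,\lambda}=1$ and $(z)_{n,\lambda}=z(z-\lambda)\cdots(z-(n-1)\lambda)$ for $n\ge1$. The degenerate exponential is $e_\lambda^{z}(t)=\sum_{n\ge0}(z)_{n,\lambda}\frac{t^n}{n!}$ (i.e. $(1+\lambda t)^{z/\lambda}$), and $e_\lambda(t)=e_\lambda^{1}(t)$. Also $\log_\lambda(1+t)=\frac{1}{\lambda}\big((1+t)^\lambda-1\big)$. The degenerate Stirling numbers of the first kind are defined by $\frac{1}{j!}(\log_\lambda(1+t))^j=\sum_{n\ge j}S_{1,\lambda}(n,j)\frac{t^n}{n!}$. The modified degenerate polyexponential function is $\mathrm{Ei}_{k,\lambda}(x)=\sum_{n\ge1}\frac{(1)_{n,\lambda}}{n^k(n-1)!}x^n$. The degenerate cosine and sine are $\cos_\lambda^{(y)}(t)=\frac{e_\lambda^{iy}(t)+e_\lambda^{-iy}(t)}{2}$ and $\sin_\lambda^{(y)}(t)=\frac{e_\lambda^{iy}(t)-e_\lambda^{-iy}(t)}{2i}$. The cosine and sine degenerate poly-Frobenius-Genocchi polynomials are defined by $\sum_{n\ge0}FG_{n,\lambda}^{[k,c]}(x,y;u)\frac{t^n}{n!}=\frac{(1-u)\mathrm{Ei}_{k,\lambda}(\log_\lambda(1+t))}{e_\lambda(t)-u}e_\lambda^{x}(t)\cos_\lambda^{(y)}(t)$ and $\sum_{n\ge0}FG_{n,\lambda}^{[k,s]}(x,y;u)\frac{t^n}{n!}=\frac{(1-u)\mathrm{Ei}_{k,\lambda}(\log_\lambda(1+t))}{e_\lambda(t)-u}e_\lambda^{x}(t)\sin_\lambda^{(y)}(t)$.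 *)

theory Defs
  imports Complex_Main "HOL-Computational_Algebra.Formal_Power_Series"
begin

definition dfall :: "complex \<Rightarrow> nat \<Rightarrow> real \<Rightarrow> complex" where
  "dfall z n lam = (\<Prod>i<n. z - of_nat i * of_real lam)"

definition dexp :: "real \<Rightarrow> complex \<Rightarrow> complex fps" where
  "dexp lam z = Abs_fps (\<lambda>n. dfall z n lam / fact n)"

definition dlog :: "real \<Rightarrow> complex fps" where
  "dlog lam = fps_const (1 / of_real lam) * (fps_binomial (of_real lam) - 1)"

definition S1 :: "real \<Rightarrow> nat \<Rightarrow> nat \<Rightarrow> complex" where
  "S1 lam n j = fact n * fps_nth (fps_const (1 / fact j) * dlog lam ^ j) n"

definition Ei_fps :: "int \<Rightarrow> real \<Rightarrow> complex fps" where
  "Ei_fps k lam = Abs_fps (\<lambda>n. if n = 0 then 0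
      else dfall 1 n lam / ((of_nat n) powi k * fact (n - 1)))"

definition dcos :: "real \<Rightarrow> complex \<Rightarrow> complex fps" where
  "dcos lam y = fps_const (1/2) * (dexp lam (\<i> * y) + dexp lam (- (\<i> * y)))"

definition dsin :: "real \<Rightarrow> complex \<Rightarrow> complex fps" where
  "dsin lam y = fps_const (1 / (2 * \<i>)) * (dexp lam (\<i> * y) - dexp lam (- (\<i> * y)))"

definition FGc_gf :: "int \<Rightarrow> real \<Rightarrow> real \<Rightarrow> real \<Rightarrow> complex \<Rightarrow> complex fps" where
  "FGc_gf k lam x y u =
     fps_const (1 - u) * (Ei_fps k lam oo dlog lam) / (dexp lam 1 - fps_const u)
       * dexp lam (of_real x) * dcos lam (of_real y)"

definition FGs_gf :: "int \<Rightarrow> real \<Rightarrow> real \<Rightarrow> real \<Rightarrow> complex \<Rightarrow> complex fps" where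
  "FGs_gf k lam x y u =
     fps_const (1 - u) * (Ei_fps k lam oo dlog lam) / (dexp lam 1 - fps_const u)
       * dexp lam (of_real x) * dsin lam (of_real y)"

definition FGc :: "nat \<Rightarrow> int \<Rightarrow> real \<Rightarrow> real \<Rightarrow> real \<Rightarrow> complex \<Rightarrow> complex" where
  "FGc n k lam x y u = fact n * fps_nth (FGc_gf k lam x y u) n"

definition FGs :: "nat \<Rightarrow> int \<Rightarrow> real \<Rightarrow> real \<Rightarrow> real \<Rightarrow> complex \<Rightarrow> complex" where
  "FGs n k lam x y u = fact n * fps_nth (FGs_gf k lam x y u) n"

end

theory Submission
  imports Defs
begin

unbundle fps_syntax

lemma egf_mult:
  fixes f g :: "complex fps"
  shows "fact n * (f*g)$n = (\<Sum>l=0..n. of_nat (n choose l) * (fact l * f$l) * (fact (n-l) * g$(n-l)))"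
proof -
  have "fact n * (f*g)$n = (\<Sum>l=0..n. fact n * (f$l * g$(n-l)))"
    by (simp add: fps_mult_nth sum_distrib_left)
  also have "\<dots> = (\<Sum>l=0..n. of_nat (n choose l) * (fact l * f$l) * (fact (n-l) * g$(n-l)))"
  proof (rule sum.cong)
    fix l assume "l \<in> {0..n}"
    then have "l \<le> n" by simp
    then have "(fact n :: complex) = of_nat (fact l * fact (n - l) * (n choose l))"
      by (simp only: binomial_fact_lemma of_nat_fact)
    then show "fact n * (f$l * g$(n-l)) = of_nat (n choose l) * (fact l * f$l) * (fact (n-l) * g$(n-l))"
      by (simp add: of_nat_fact algebra_simps)
  qed simp
  finally show ?thesis .
qed

lemma Eg_nth:
  "fact N * (Ei_fps k lam oo dlog lam)$N =
     (\<Sum>j=1..N. dfall 1 j lam / (of_nat j powi (k - 1)) * S1 lam N j)"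
proof -
  have "fact N * (Ei_fps k lam oo dlog lam)$N =
     (\<Sum>j=0..N. fact N * (Ei_fps k lam $ j * (dlog lam ^ j $ N)))"
    by (simp add: fps_compose_nth sum_distrib_left)
  also have "\<dots> = (\<Sum>j=1..N. fact N * (Ei_fps k lam $ j * (dlog lam ^ j $ N)))"
    by (simp add: sum.atLeast_Suc_atMost Ei_fps_def)
  also have "\<dots> = (\<Sum>j=1..N. dfall 1 j lam / (of_nat j powi (k - 1)) * S1 lam N j)"
  proof (rule sum.cong)
    fix j assume "j \<in> {1..N}"
    then have j: "j > 0" by simp
    have f: "(fact j :: complex) = of_nat j * fact (j - 1)" using fact_reduce[OF j] .
    have p: "(of_nat j :: complex) powi k = of_nat j powi (k - 1) * of_nat j"
      using power_int_minus_mult[of "of_nat j :: complex" k] j by simp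
    have nz: "(of_nat j :: complex) powi (k - 1) \<noteq> 0" using j by simp
    have nz2: "(fact (j - 1) :: complex) \<noteq> 0" by simp
    show "fact N * (Ei_fps k lam $ j * (dlog lam ^ j $ N)) =
        dfall 1 j lam / (of_nat j powi (k - 1)) * S1 lam N j"
      using j nz nz2 by (simp add: Ei_fps_def S1_def f p field_simps)
  qed simp
  finally show ?thesis .
qed


lemma main_gen:
  fixes lam x :: real and k :: int and u c s a b :: complex and n :: nat and T F :: "complex fps"
  assumes u: "u \<noteq> 1"
    and F: "F = fps_const (1 - u) * (Ei_fps k lam oo dlog lam) / (dexp lam 1 - fps_const u)
       * dexp lam (of_real x) * T"
    and T: "fps_const c * T = dexp lam a + fps_const s * dexp lam b"
  shows "c * ((\<Sum>l=0..n. of_nat (n choose l) * dfall 1 (n - l) lam * (fact l * F$l))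
              - u * (fact n * F$n))
         = (1 - u) * of_nat n * (\<Sum>m<n. of_nat ((n - 1) choose m) / of_nat (m + 1) *
             (\<Sum>j=1..m+1. dfall 1 j lam / (of_nat j powi (k - 1)) * S1 lam (m + 1) j) *
             (\<Sum>l=0..n-1-m. of_nat ((n - 1 - m) choose l) * dfall (of_real x) (n - 1 - m - l) lam *
                (dfall a l lam + s * dfall b l lam)))"
proof -
  define Eg where "Eg = Ei_fps k lam oo dlog lam"
  define D where "D = dexp lam 1 - fps_const u"
  define dx where "dx = dexp lam (of_real x)"
  have D0: "D $ 0 \<noteq> 0" using u by (simp add: D_def dexp_def dfall_def)
  have DF: "D * F = fps_const (1 - u) * Eg * (dx * T)"
  proof -
    have Fi: "F = fps_const (1 - u) * Eg * inverse D * dx * T"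
      unfolding F D_def[symmetric] Eg_def[symmetric] dx_def[symmetric]
      by (simp add: fps_divide_unit[OF D0])
    have "D * F = (D * inverse D) * (fps_const (1 - u) * Eg * dx * T)"
      unfolding Fi by (simp only: mult.assoc mult.left_commute)
    also have "\<dots> = fps_const (1 - u) * Eg * (dx * T)"
      using inverse_mult_eq_1'[OF D0] by (simp add: mult.assoc)
    finally show ?thesis .
  qed
  have LHS: "fact n * (D * F) $ n = (\<Sum>l=0..n. of_nat (n choose l) * dfall 1 (n - l) lam * (fact l * F$l))
              - u * (fact n * F$n)"
  proof -
    have "D * F = F * dexp lam 1 - fps_const u * F" by (simp add: D_def algebra_simps)
    then have "(D * F) $ n = (F * dexp lam 1) $ n - u * F$n"
      by simp
    then have "fact n * (D * F) $ n = fact n * (F * dexp lam 1) $ n - u * (fact n * F$n)"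
      by (simp only: right_diff_distrib mult.left_commute)
    also have "fact n * (F * dexp lam 1) $ n = (\<Sum>l=0..n. of_nat (n choose l) * dfall 1 (n - l) lam * (fact l * F$l))"
      unfolding egf_mult by (rule sum.cong) (simp_all add: dexp_def)
    finally show ?thesis .
  qed
  have H: "fact p * c * (dx * T) $ p = (\<Sum>l=0..p. of_nat (p choose l) * dfall (of_real x) (p - l) lam *
                (dfall a l lam + s * dfall b l lam))" for p
  proof -
    have e: "(fps_const c * T) * dx = fps_const c * (dx * T)" by (simp only: ac_simps)
    have "c * (dx * T) $ p = ((fps_const c * T) * dx) $ p" unfolding e by simp
    then have "fact p * c * (dx * T) $ p = fact p * ((dexp lam a + fps_const s * dexp lam b) * dx) $ p"
      by (simp add: T)
    also have "\<dots> = (\<Sum>l=0..p. of_nat (p choose l) * dfall (of_real x) (p - l) lam *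
                (dfall a l lam + s * dfall b l lam))"
      unfolding egf_mult by (rule sum.cong) (simp_all add: dexp_def dx_def algebra_simps)
    finally show ?thesis .
  qed
  have "c * (fact n * (D * F) $ n) = (1 - u) * (c * (fact n * (Eg * (dx * T)) $ n))"
    unfolding DF by (simp add: mult.assoc)
  also have "c * (fact n * (Eg * (dx * T)) $ n) =
     (\<Sum>N=0..n. of_nat (n choose N) * (fact N * Eg $ N) * (fact (n - N) * c * (dx * T) $ (n - N)))"
    unfolding egf_mult[of n Eg "dx * T"] sum_distrib_left by (rule sum.cong) (simp_all add: ac_simps)
  also have "\<dots> = of_nat n * (\<Sum>m<n. of_nat ((n - 1) choose m) / of_nat (m + 1) *
             (\<Sum>j=1..m+1. dfall 1 j lam / (of_nat j powi (k - 1)) * S1 lam (m + 1) j) *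
             (\<Sum>l=0..n-1-m. of_nat ((n - 1 - m) choose l) * dfall (of_real x) (n - 1 - m - l) lam *
                (dfall a l lam + s * dfall b l lam)))"
  proof (cases n)
    case 0
    then show ?thesis by (simp add: Eg_def Ei_fps_def)
  next
    case (Suc n')
    have "(\<Sum>N=0..n. of_nat (n choose N) * (fact N * Eg $ N) * (fact (n - N) * c * (dx * T) $ (n - N)))
       = (\<Sum>m\<le>n'. of_nat (n choose Suc m) * (fact (Suc m) * Eg $ Suc m) * (fact (n - Suc m) * c * (dx * T) $ (n - Suc m)))"
      unfolding Suc atLeast0AtMost sum.atMost_Suc_shift by (simp add: Eg_def Ei_fps_def)
    also have "\<dots> = of_nat n * (\<Sum>m<n. of_nat ((n - 1) choose m) / of_nat (m + 1) *
             (\<Sum>j=1..m+1. dfall 1 j lam / (of_nat j powi (k - 1)) * S1 lam (m + 1) j) *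
             (\<Sum>l=0..n-1-m. of_nat ((n - 1 - m) choose l) * dfall (of_real x) (n - 1 - m - l) lam *
                (dfall a l lam + s * dfall b l lam)))"
    proof -
      have trm: "of_nat (Suc n' choose Suc m) * (fact (Suc m) * Eg $ Suc m) * (fact (Suc n' - Suc m) * c * (dx * T) $ (Suc n' - Suc m))
        = of_nat (Suc n') * (of_nat ((Suc n' - 1) choose m) / of_nat (m + 1) *
             (\<Sum>j=1..m+1. dfall 1 j lam / (of_nat j powi (k - 1)) * S1 lam (m + 1) j) *
             (\<Sum>l=0..Suc n'-1-m. of_nat ((Suc n' - 1 - m) choose l) * dfall (of_real x) (Suc n' - 1 - m - l) lam *
                (dfall a l lam + s * dfall b l lam)))" for m
      proof -
        have bin: "of_nat (Suc m) * of_nat (Suc n' choose Suc m) = (of_nat (Suc n') * of_nat (n' choose m) :: complex)"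
        proof -
          have "Suc m * (Suc n' choose Suc m) = Suc n' * (n' choose m)"
            by (metis times_binomial_minus1_eq zero_less_Suc diff_Suc_1)
          then have "of_nat (Suc m * (Suc n' choose Suc m)) = (of_nat (Suc n' * (n' choose m)) :: complex)"
            by (rule arg_cong)
          then show ?thesis by (simp only: of_nat_mult)
        qed
        have nz: "(of_nat (Suc m)::complex) \<noteq> 0" by (simp only: of_nat_eq_0_iff)
        have bc: "(of_nat (Suc n' choose Suc m) :: complex) = of_nat (Suc n') * of_nat (n' choose m) / of_nat (Suc m)"
          using bin nz by (metis nonzero_eq_divide_eq mult.commute)
        have gen: "\<And>A B :: complex. of_nat (Suc n' choose Suc m) * A * B = of_nat (Suc n') * (of_nat (n' choose m) / of_nat (Suc m) * A * B)"
          unfolding bc by simp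
        have i1: "Suc n' - Suc m = Suc n' - 1 - m" by simp
        have i2: "m + 1 = Suc m" by simp
        show ?thesis
          unfolding i1 Eg_def Eg_nth H i2 diff_Suc_1 by (rule gen)
      qed
      show ?thesis unfolding Suc lessThan_Suc_atMost trm sum_distrib_left ..
    qed
    finally show ?thesis .
  qed
  finally show ?thesis using LHS by (simp add: mult.assoc)
qed

theorem theorem5:
  fixes lam x y :: real and k :: int and u :: complex and n :: nat
  assumes "lam \<noteq> 0" and "u \<noteq> 1"
  shows "(2 * ((\<Sum>l=0..n. of_nat (n choose l) * dfall 1 (n - l) lam * FGc l k lam x y u)
              - u * FGc n k lam x y u)
         = (1 - u) * of_nat n * (\<Sum>m<n. of_nat ((n - 1) choose m) / of_nat (m + 1) *
             (\<Sum>j=1..m+1. dfall 1 j lam / (of_nat j powi (k - 1)) * S1 lam (m + 1) j) *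
             (\<Sum>l=0..n-1-m. of_nat ((n - 1 - m) choose l) * dfall (of_real x) (n - 1 - m - l) lam *
                (dfall (\<i> * of_real y) l lam + dfall (- (\<i> * of_real y)) l lam)))) \<and>
        (2 * \<i> * ((\<Sum>l=0..n. of_nat (n choose l) * dfall 1 (n - l) lam * FGs l k lam x y u)
              - u * FGs n k lam x y u)
         = (1 - u) * of_nat n * (\<Sum>m<n. of_nat ((n - 1) choose m) / of_nat (m + 1) *
             (\<Sum>j=1..m+1. dfall 1 j lam / (of_nat j powi (k - 1)) * S1 lam (m + 1) j) *
             (\<Sum>l=0..n-1-m. of_nat ((n - 1 - m) choose l) * dfall (of_real x) (n - 1 - m - l) lam *
                (dfall (\<i> * of_real y) l lam - dfall (- (\<i> * of_real y)) l lam))))"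
proof -
  have Tc: "fps_const 2 * dcos lam (of_real y) = dexp lam (\<i> * of_real y) + fps_const 1 * dexp lam (- (\<i> * of_real y))"
    unfolding dcos_def by (subst mult.assoc[symmetric], subst fps_const_mult, simp)
  have m1: "fps_const (-1::complex) = -1" by (rule fps_ext) simp
  have Ts: "fps_const (2 * \<i>) * dsin lam (of_real y) = dexp lam (\<i> * of_real y) + fps_const (-1) * dexp lam (- (\<i> * of_real y))"
    unfolding dsin_def by (subst mult.assoc[symmetric], subst fps_const_mult, simp add: m1)
  note C = main_gen[OF assms(2) FGc_gf_def Tc, where n=n]
  note S = main_gen[OF assms(2) FGs_gf_def Ts, where n=n]
  show ?thesis unfolding FGc_def FGs_def using C S by simp
qed

end
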